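(* Let $G$ be a simple directed graph. The unrestricted transition matrix of simple moves $T^u_{\mathrm{SM}}=p_{\mathrm{SEF}}T^u_{\mathrm{SEF}}+p_{\mathrm{DEM}}T^u_{\mathrm{DEM}}$ (with $p_{\mathrm{SEF}},p_{\mathrm{DEM}}\in(0,1)$, $p_{\mathrm{SEF}}+p_{\mathrm{DEM}}=1$) is doubly stochastic and irreducible on the state space $\mathcal{G}_0^\infty(G)$. If $G$ further contains at least one double edge, $T^u_{\mathrm{SM}}$ is also aperiodic.
   Context: A simple directed graph is a pair $G=(V,E)$ with $V$ finite and $E\subseteq (V\times V)\setminus\{(v,v):v\in V\}$. An edge $(i,j)\in E$ is a single edge if $(j,i)\notin E$; an ordered pair $(k,l)$ is a double edge if both $(k,l),(l,k)\in E$. $\mathrm{pr}(V,E)=(V,\{\{u,v\}:(u,v)\in E\})$. $\mathcal{G}_0^\infty(G)$ is the (finite) set of all simple directed graphs $G'$ on $V$ with $\mathrm{pr}(G')=\mathrm{pr}(G)$ and the same number of directed edges as $G$. Moves: $\mathrm{SEF}_{i,j}(V,E)=(V,(E\setminus\{(i,j)\})\cup\{(j,i)\})$ for a single edge $(i,j)$; $\mathrm{DEM}^{k,l}_{i,j}(V,E)=(V,(E\setminus\{(k,l)\})\cup\{(j,i)\})$ for a single edge $(i,j)$ and a double edge $(k,l)$. Transition matrices on $\mathcal{G}_0^\infty(G)$: $T^u_{\mathrm{SEF}}(H,H')$ is the probability that a single edge $(i,j)$ of $H$, drawn uniformly among all single edges of $H$, satisfies $\mathrm{SEF}_{i,j}(H)=H'$;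 $T^u_{\mathrm{DEM}}(H,H')$ is the probability that a single edge $(i,j)$ and a double edge $(k,l)$ of $H$, each drawn uniformly among the single (resp. double) edges of $H$, satisfy $\mathrm{DEM}^{k,l}_{i,j}(H)=H'$. Convention: if $H$ has no eligible edges for a move (no single edge for SEF; no single edge or no double edge for DEM), that move leaves $H$ unchanged, i.e. the corresponding matrix has $1$ on the diagonal entry $(H,H)$. A matrix is doubly stochastic if it and its transpose are stochastic; irreducible if every state is reachable from every other with positive probability in finitely many steps; aperiodic if the gcd of the return times of the chain is $1$. *)

theory Defs
  imports Complex_Main
begin

definition simple_digraph :: "'v set \<Rightarrow> ('v \<times> 'v) set \<Rightarrow> bool" where
  "simple_digraph V E \<longleftrightarrow> finite V \<and> E \<subseteq> V \<times> V \<and> (\<forall>v. (v, v) \<notin> E)"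

definition single_edges :: "('v \<times> 'v) set \<Rightarrow> ('v \<times> 'v) set" where
  "single_edges E = {(i, j). (i, j) \<in> E \<and> (j, i) \<notin> E}"

definition double_edges :: "('v \<times> 'v) set \<Rightarrow> ('v \<times> 'v) set" where
  "double_edges E = {(k, l). (k, l) \<in> E \<and> (l, k) \<in> E}"

definition pr_edges :: "('v \<times> 'v) set \<Rightarrow> 'v set set" where
  "pr_edges E = {{u, v} | u v. (u, v) \<in> E}"

definition state_space :: "'v set \<Rightarrow> ('v \<times> 'v) set \<Rightarrow> ('v \<times> 'v) set set" where
  "state_space V E = {E'. simple_digraph V E' \<and> pr_edges E' = pr_edges E \<and> card E' = card E}"

definition SEF :: "'v \<Rightarrow> 'v \<Rightarrow> ('v \<times> 'v) set \<Rightarrow> ('v \<times> 'v) set" where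
  "SEF i j E = (E - {(i, j)}) \<union> {(j, i)}"

definition DEM :: "'v \<Rightarrow> 'v \<Rightarrow> 'v \<Rightarrow> 'v \<Rightarrow> ('v \<times> 'v) set \<Rightarrow> ('v \<times> 'v) set" where
  "DEM k l i j E = (E - {(k, l)}) \<union> {(j, i)}"

definition T_SEF :: "('v \<times> 'v) set \<Rightarrow> ('v \<times> 'v) set \<Rightarrow> real" where
  "T_SEF H H' =
     (if single_edges H = {} then (if H' = H then 1 else 0)
      else real (card {(i, j) \<in> single_edges H. SEF i j H = H'}) / real (card (single_edges H)))"

definition T_DEM :: "('v \<times> 'v) set \<Rightarrow> ('v \<times> 'v) set \<Rightarrow> real" where
  "T_DEM H H' =
     (if single_edges H = {} \<or> double_edges H = {} then (if H' = H then 1 else 0)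
      else real (card {((i, j), (k, l)) \<in> single_edges H \<times> double_edges H. DEM k l i j H = H'})
           / (real (card (single_edges H)) * real (card (double_edges H))))"

definition T_SM :: "real \<Rightarrow> real \<Rightarrow> ('v \<times> 'v) set \<Rightarrow> ('v \<times> 'v) set \<Rightarrow> real" where
  "T_SM p_SEF p_DEM H H' = p_SEF * T_SEF H H' + p_DEM * T_DEM H H'"

definition stochastic_on :: "'s set \<Rightarrow> ('s \<Rightarrow> 's \<Rightarrow> real) \<Rightarrow> bool" where
  "stochastic_on S T \<longleftrightarrow> (\<forall>x\<in>S. \<forall>y\<in>S. T x y \<ge> 0) \<and> (\<forall>x\<in>S. (\<Sum>y\<in>S. T x y) = 1)"

definition doubly_stochastic_on :: "'s set \<Rightarrow> ('s \<Rightarrow> 's \<Rightarrow> real) \<Rightarrow> bool" where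
  "doubly_stochastic_on S T \<longleftrightarrow> stochastic_on S T \<and> stochastic_on S (\<lambda>x y. T y x)"

fun mat_pow_on :: "'s set \<Rightarrow> ('s \<Rightarrow> 's \<Rightarrow> real) \<Rightarrow> nat \<Rightarrow> 's \<Rightarrow> 's \<Rightarrow> real" where
  "mat_pow_on S T 0 x y = (if x = y then 1 else 0)"
| "mat_pow_on S T (Suc n) x y = (\<Sum>z\<in>S. mat_pow_on S T n x z * T z y)"

definition irreducible_on :: "'s set \<Rightarrow> ('s \<Rightarrow> 's \<Rightarrow> real) \<Rightarrow> bool" where
  "irreducible_on S T \<longleftrightarrow> (\<forall>x\<in>S. \<forall>y\<in>S. \<exists>n. mat_pow_on S T n x y > 0)"

definition aperiodic_on :: "'s set \<Rightarrow> ('s \<Rightarrow> 's \<Rightarrow> real) \<Rightarrow> bool" where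
  "aperiodic_on S T \<longleftrightarrow> (\<forall>x\<in>S. Gcd {n. n > 0 \<and> mat_pow_on S T n x x > 0} = 1)"

end

theory Submission imports Defs begin

lemma pr_eq:
  "pr_edges A = pr_edges B \<longleftrightarrow> (\<forall>u v. ((u,v)\<in>A \<or> (v,u)\<in>A) \<longleftrightarrow> ((u,v)\<in>B \<or> (v,u)\<in>B))"
proof
  assume h: "pr_edges A = pr_edges B"
  show "\<forall>u v. ((u,v)\<in>A \<or> (v,u)\<in>A) \<longleftrightarrow> ((u,v)\<in>B \<or> (v,u)\<in>B)"
  proof (intro allI)
    fix u v
    have "((u,v)\<in>A \<or> (v,u)\<in>A) \<longleftrightarrow> {u,v} \<in> pr_edges A"
      unfolding pr_edges_def by (auto simp: doubleton_eq_iff insert_commute)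
    moreover have "((u,v)\<in>B \<or> (v,u)\<in>B) \<longleftrightarrow> {u,v} \<in> pr_edges B"
      unfolding pr_edges_def by (auto simp: doubleton_eq_iff insert_commute)
    ultimately show "((u,v)\<in>A \<or> (v,u)\<in>A) \<longleftrightarrow> ((u,v)\<in>B \<or> (v,u)\<in>B)" using h by simp
  qed
next
  assume h: "\<forall>u v. ((u,v)\<in>A \<or> (v,u)\<in>A) \<longleftrightarrow> ((u,v)\<in>B \<or> (v,u)\<in>B)"
  show "pr_edges A = pr_edges B"
    unfolding pr_edges_def
  proof (intro set_eqI iffI)
    fix p assume "p \<in> {{u, v} |u v. (u, v) \<in> A}"
    then obtain u v where p: "p = {u,v}" "(u,v) \<in> A" by blast
    then have "(u,v) \<in> B \<or> (v,u) \<in> B" using h by blast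
    then show "p \<in> {{u, v} |u v. (u, v) \<in> B}"
    proof
      assume "(u,v) \<in> B" then show ?thesis using p by blast
    next
      assume "(v,u) \<in> B" then show ?thesis using p by (blast intro: insert_commute)
    qed
  next
    fix p assume "p \<in> {{u, v} |u v. (u, v) \<in> B}"
    then obtain u v where p: "p = {u,v}" "(u,v) \<in> B" by blast
    then have "(u,v) \<in> A \<or> (v,u) \<in> A" using h by blast
    then show "p \<in> {{u, v} |u v. (u, v) \<in> A}"
    proof
      assume "(u,v) \<in> A" then show ?thesis using p by blast
    next
      assume "(v,u) \<in> A" then show ?thesis using p by (blast intro: insert_commute)
    qed
  qed
qed

lemma S_finite: "simple_digraph V E \<Longrightarrow> finite (state_space V E)"
proof -
  assume "simple_digraph V E"
  then have "finite (Pow (V \<times> V))" by (simp add: simple_digraph_def)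
  moreover have "state_space V E \<subseteq> Pow (V \<times> V)"
    by (auto simp: state_space_def simple_digraph_def)
  ultimately show ?thesis by (rule finite_subset[rotated])
qed

lemma S_mem:
  assumes "x \<in> state_space V E"
  shows "finite x" "x \<subseteq> V \<times> V" "\<And>v. (v,v) \<notin> x" "card x = card E"
    "\<And>u v. ((u,v)\<in>x \<or> (v,u)\<in>x) \<longleftrightarrow> ((u,v)\<in>E \<or> (v,u)\<in>E)"
proof -
  have "pr_edges x = pr_edges E" using assms by (simp add: state_space_def)
  then have "\<forall>u v. ((u,v)\<in>x \<or> (v,u)\<in>x) \<longleftrightarrow> ((u,v)\<in>E \<or> (v,u)\<in>E)" using pr_eq[of x E] by blast
  then show "\<And>u v. ((u,v)\<in>x \<or> (v,u)\<in>x) \<longleftrightarrow> ((u,v)\<in>E \<or> (v,u)\<in>E)" by blast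
  show "finite x" "x \<subseteq> V \<times> V" "\<And>v. (v,v) \<notin> x" "card x = card E"
    using assms unfolding state_space_def simple_digraph_def
    by (auto intro: finite_subset)
qed

lemma double_conv: "double_edges x = x \<inter> x\<inverse>"
  by (auto simp: double_edges_def)

lemma single_conv: "single_edges x = x - double_edges x"
  by (auto simp: double_edges_def single_edges_def)

lemma card_double_const:
  assumes x: "x \<in> state_space V E" and y: "y \<in> state_space V E"
  shows "card (double_edges x) = card (double_edges y)"
proof -
  have U: "x \<union> x\<inverse> = y \<union> y\<inverse>" using S_mem(5)[OF x] S_mem(5)[OF y] by auto
  have fx: "finite x" and fy: "finite y" using S_mem(1) x y by auto
  have "card (x \<union> x\<inverse>) + card (x \<inter> x\<inverse>) = card x + card x"
    using card_Un_Int[of x "x\<inverse>"] fx by simp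
  moreover have "card (y \<union> y\<inverse>) + card (y \<inter> y\<inverse>) = card y + card y"
    using card_Un_Int[of y "y\<inverse>"] fy by simp
  ultimately show ?thesis using U S_mem(4)[OF x] S_mem(4)[OF y] by (simp add: double_conv)
qed

lemma card_single_const:
  assumes x: "x \<in> state_space V E" and y: "y \<in> state_space V E"
  shows "card (single_edges x) = card (single_edges y)"
proof -
  have "card (single_edges x) = card x - card (double_edges x)"
    unfolding single_conv using S_mem(1)[OF x] 
    by (simp add: card_Diff_subset double_conv finite_subset)
  moreover have "card (single_edges y) = card y - card (double_edges y)"
    unfolding single_conv using S_mem(1)[OF y] 
    by (simp add: card_Diff_subset double_conv finite_subset)
  ultimately show ?thesis using card_double_const[OF x y] S_mem(4)[OF x] S_mem(4)[OF y] by simp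
qed

lemma S_intro:
  assumes "simple_digraph V E" "finite x" "x \<subseteq> V \<times> V" "\<And>v. (v,v) \<notin> x" "card x = card E"
    "\<And>u v. ((u,v)\<in>x \<or> (v,u)\<in>x) \<longleftrightarrow> ((u,v)\<in>E \<or> (v,u)\<in>E)"
  shows "x \<in> state_space V E"
  using assms unfolding state_space_def simple_digraph_def
  by (auto simp: pr_eq)

lemma SEF_in:
  assumes G: "simple_digraph V E" and x: "x \<in> state_space V E" and e: "(i,j) \<in> single_edges x"
  shows "SEF i j x \<in> state_space V E"
proof (rule S_intro[OF G])
  have ij: "(i,j) \<in> x" "(j,i) \<notin> x" using e by (auto simp: single_edges_def)
  note m = S_mem[OF x]
  show "finite (SEF i j x)" using m(1) by (simp add: SEF_def)
  show "SEF i j x \<subseteq> V \<times> V" using m(2) ij by (auto simp: SEF_def)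
  show "\<And>v. (v,v) \<notin> SEF i j x" using m(3) ij by (auto simp: SEF_def)
  have "card x > 0" using ij m(1) by (simp only: card_gt_0_iff) blast
  then show "card (SEF i j x) = card E" using m(1,4) ij
    by (simp add: SEF_def card_insert_if card_Diff_singleton_if)
  show "\<And>u v. ((u,v)\<in>SEF i j x \<or> (v,u)\<in>SEF i j x) \<longleftrightarrow> ((u,v)\<in>E \<or> (v,u)\<in>E)"
    using m(5) ij by (auto simp: SEF_def)
qed

lemma DEM_in:
  assumes G: "simple_digraph V E" and x: "x \<in> state_space V E" and e: "(i,j) \<in> single_edges x"
    and d: "(k,l) \<in> double_edges x"
  shows "DEM k l i j x \<in> state_space V E"
proof (rule S_intro[OF G])
  have ij: "(i,j) \<in> x" "(j,i) \<notin> x" using e by (auto simp: single_edges_def)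
  have kl: "(k,l) \<in> x" "(l,k) \<in> x" using d by (auto simp: double_edges_def)
  note m = S_mem[OF x]
  have "k \<noteq> l" using kl m(3) by auto
  show "finite (DEM k l i j x)" using m(1) by (simp add: DEM_def)
  show "DEM k l i j x \<subseteq> V \<times> V" using m(2) ij by (auto simp: DEM_def)
  show "\<And>v. (v,v) \<notin> DEM k l i j x" using m(3) ij by (auto simp: DEM_def)
  have "card x > 0" using ij m(1) by (simp only: card_gt_0_iff) blast
  then show "card (DEM k l i j x) = card E" using m(1,4) ij kl
    by (auto simp: DEM_def card_insert_if card_Diff_singleton_if)
  show "\<And>u v. ((u,v)\<in>DEM k l i j x \<or> (v,u)\<in>DEM k l i j x) \<longleftrightarrow> ((u,v)\<in>E \<or> (v,u)\<in>E)"
    using m(5) ij kl \<open>k \<noteq> l\<close> by (auto simp: DEM_def)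
qed


lemma single_mem: "(i,j) \<in> single_edges x \<longleftrightarrow> (i,j) \<in> x \<and> (j,i) \<notin> x"
  by (simp add: single_edges_def)
lemma double_mem: "(i,j) \<in> double_edges x \<longleftrightarrow> (i,j) \<in> x \<and> (j,i) \<in> x"
  by (simp add: double_edges_def)

lemma finite_single: "x \<in> state_space V E \<Longrightarrow> finite (single_edges x)"
  using S_mem(1) by (auto simp: single_conv)
lemma finite_double: "x \<in> state_space V E \<Longrightarrow> finite (double_edges x)"
  using S_mem(1) by (auto simp: double_conv)

lemma fin_sub1: "x \<in> state_space V E \<Longrightarrow> finite {(i, j) \<in> single_edges x. P i j}"
  by (rule finite_subset[of _ "single_edges x"]) (auto simp: finite_single)
lemma fin_sub2: "x \<in> state_space V E \<Longrightarrow> finite {((i, j), (k, l)) \<in> single_edges x \<times> double_edges x. P i j k l}"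
  by (rule finite_subset[of _ "single_edges x \<times> double_edges x"]) (auto simp: finite_single finite_double)

lemma SEF_swap:
  assumes "(i,j) \<in> single_edges x" "SEF i j x = y"
  shows "(j,i) \<in> single_edges y \<and> SEF j i y = x"
  using assms by (auto simp: single_mem SEF_def)

lemma DEM_swap:
  assumes "(i,j) \<in> single_edges x" "(k,l) \<in> double_edges x" "DEM k l i j x = y" "k \<noteq> l"
  shows "(l,k) \<in> single_edges y \<and> (j,i) \<in> double_edges y \<and> DEM j i l k y = x"
proof -
  have h: "(i,j) \<in> x" "(j,i) \<notin> x" "(k,l) \<in> x" "(l,k) \<in> x" using assms(1,2) by (auto simp: single_mem double_mem)
  have y: "y = insert (j,i) (x - {(k,l)})" using assms(3) by (simp add: DEM_def)
  have n: "(k,l) \<noteq> (j,i)" "(i,j) \<noteq> (k,l)" "(l,k) \<noteq> (k,l)" "(j,i) \<noteq> (i,j)" using h assms(4) by auto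
  have "(l,k) \<in> y" "(k,l) \<notin> y" "(j,i) \<in> y" "(i,j) \<in> y" using h n unfolding y by auto
  moreover have "DEM j i l k y = x" unfolding DEM_def y using h n by blast
  ultimately show ?thesis by (simp add: single_mem double_mem)
qed

lemma SEF_card_le:
  assumes y: "y \<in> state_space V E"
  shows "card {(i, j) \<in> single_edges x. SEF i j x = y} \<le> card {(i, j) \<in> single_edges y. SEF i j y = x}"
proof (rule card_inj_on_le[where f = "\<lambda>(a,b). (b,a)"])
  show "inj_on (\<lambda>(a,b). (b,a)) {(i, j) \<in> single_edges x. SEF i j x = y}"
    by (auto simp: inj_on_def)
  show "(\<lambda>(a,b). (b,a)) ` {(i, j) \<in> single_edges x. SEF i j x = y} \<subseteq> {(i, j) \<in> single_edges y. SEF i j y = x}"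
  proof
    fix q assume "q \<in> (\<lambda>(a,b). (b,a)) ` {(i, j) \<in> single_edges x. SEF i j x = y}"
    then obtain i j where h: "(i,j) \<in> single_edges x" "SEF i j x = y" "q = (j,i)" by auto
    then show "q \<in> {(i, j) \<in> single_edges y. SEF i j y = x}" using SEF_swap[OF h(1,2)] by simp
  qed
  show "finite {(i, j) \<in> single_edges y. SEF i j y = x}"
    using fin_sub1[OF y] by simp
qed

lemma DEM_card_le:
  assumes x: "x \<in> state_space V E" and y: "y \<in> state_space V E"
  shows "card {((i, j), (k, l)) \<in> single_edges x \<times> double_edges x. DEM k l i j x = y}
     \<le> card {((i, j), (k, l)) \<in> single_edges y \<times> double_edges y. DEM k l i j y = x}"
proof (rule card_inj_on_le[where f = "\<lambda>((i,j),(k,l)). ((l,k),(j,i))"])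
  show "inj_on (\<lambda>((i,j),(k,l)). ((l,k),(j,i))) {((i, j), (k, l)) \<in> single_edges x \<times> double_edges x. DEM k l i j x = y}"
    by (auto simp: inj_on_def)
  show "(\<lambda>((i,j),(k,l)). ((l,k),(j,i))) ` {((i, j), (k, l)) \<in> single_edges x \<times> double_edges x. DEM k l i j x = y}
     \<subseteq> {((i, j), (k, l)) \<in> single_edges y \<times> double_edges y. DEM k l i j y = x}"
  proof
    fix q assume "q \<in> (\<lambda>((i,j),(k,l)). ((l,k),(j,i))) ` {((i, j), (k, l)) \<in> single_edges x \<times> double_edges x. DEM k l i j x = y}"
    then obtain i j k l where h: "(i,j) \<in> single_edges x" "(k,l) \<in> double_edges x" "DEM k l i j x = y" "q = ((l,k),(j,i))" by auto
    have "k \<noteq> l" using h(2) S_mem(3)[OF x] by (auto simp: double_mem)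
    then show "q \<in> {((i, j), (k, l)) \<in> single_edges y \<times> double_edges y. DEM k l i j y = x}" using DEM_swap[OF h(1,2,3)] h(4) by simp
  qed
  show "finite {((i, j), (k, l)) \<in> single_edges y \<times> double_edges y. DEM k l i j y = x}"
    using fin_sub2[OF y] by simp
qed

lemma T_SEF_sym:
  assumes x: "x \<in> state_space V E" and y: "y \<in> state_space V E"
  shows "T_SEF x y = T_SEF y x"
proof -
  have c: "card (single_edges x) = card (single_edges y)" by (rule card_single_const[OF x y])
  have e: "single_edges x = {} \<longleftrightarrow> single_edges y = {}"
    using c finite_single[OF x] finite_single[OF y] by auto
  have "card {(i, j) \<in> single_edges x. SEF i j x = y} = card {(i, j) \<in> single_edges y. SEF i j y = x}"
    using SEF_card_le[OF x, of y] SEF_card_le[OF y, of x] by simp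
  then show ?thesis unfolding T_SEF_def using c e by auto
qed

lemma T_DEM_sym:
  assumes x: "x \<in> state_space V E" and y: "y \<in> state_space V E"
  shows "T_DEM x y = T_DEM y x"
proof -
  have c: "card (single_edges x) = card (single_edges y)" by (rule card_single_const[OF x y])
  have d: "card (double_edges x) = card (double_edges y)" by (rule card_double_const[OF x y])
  have e: "single_edges x = {} \<longleftrightarrow> single_edges y = {}"
    using c finite_single[OF x] finite_single[OF y] by auto
  have e2: "double_edges x = {} \<longleftrightarrow> double_edges y = {}"
    using d finite_double[OF x] finite_double[OF y] by auto
  have "card {((i, j), (k, l)) \<in> single_edges x \<times> double_edges x. DEM k l i j x = y}
     = card {((i, j), (k, l)) \<in> single_edges y \<times> double_edges y. DEM k l i j y = x}"
    using DEM_card_le[OF x y] DEM_card_le[OF y x] by simp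
  then show ?thesis unfolding T_DEM_def using c d e e2 by auto
qed

lemma sum_fibers:
  "finite A \<Longrightarrow> finite S \<Longrightarrow> g ` A \<subseteq> S \<Longrightarrow> (\<Sum>y\<in>S. card {a \<in> A. g a = y}) = card A"
  using sum.group[of A S g "\<lambda>_. 1::nat"] by simp

lemma sum_fibers2:
  assumes "finite A" "finite S" "\<And>i j. (i,j) \<in> A \<Longrightarrow> f i j \<in> S"
  shows "(\<Sum>y\<in>S. card {(i, j) \<in> A. f i j = y}) = card A"
proof -
  have "(\<Sum>y\<in>S. card {(i, j) \<in> A. f i j = y}) = (\<Sum>y\<in>S. card {a \<in> A. (\<lambda>(i,j). f i j) a = y})"
    by (rule sum.cong[OF refl], rule arg_cong[where f=card], rule Collect_cong) auto
  also have "\<dots> = card A"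
    by (rule sum_fibers) (use assms in auto)
  finally show ?thesis .
qed

lemma sum_fibers4:
  assumes "finite A" "finite S" "\<And>i j k l. ((i,j),(k,l)) \<in> A \<Longrightarrow> f i j k l \<in> S"
  shows "(\<Sum>y\<in>S. card {((i, j), (k, l)) \<in> A. f i j k l = y}) = card A"
proof -
  have "(\<Sum>y\<in>S. card {((i, j), (k, l)) \<in> A. f i j k l = y}) = (\<Sum>y\<in>S. card {a \<in> A. (\<lambda>((i,j),(k,l)). f i j k l) a = y})"
    by (rule sum.cong[OF refl], rule arg_cong[where f=card], rule Collect_cong) auto
  also have "\<dots> = card A"
    by (rule sum_fibers) (use assms in auto)
  finally show ?thesis .
qed

lemma T_SEF_row:
  assumes G: "simple_digraph V E" and x: "x \<in> state_space V E"
  shows "(\<Sum>y\<in>state_space V E. T_SEF x y) = 1"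
proof (cases "single_edges x = {}")
  case True
  then show ?thesis using x S_finite[OF G] by (simp add: T_SEF_def)
next
  case False
  let ?A = "single_edges x"
  have c: "(\<Sum>y\<in>state_space V E. card {(i, j) \<in> ?A. SEF i j x = y}) = card ?A"
    by (rule sum_fibers2[OF finite_single[OF x] S_finite[OF G]]) (rule SEF_in[OF G x])
  have "(\<Sum>y\<in>state_space V E. T_SEF x y) = (\<Sum>y\<in>state_space V E. real (card {(i, j) \<in> ?A. SEF i j x = y}) / real (card ?A))"
    by (rule sum.cong[OF refl]) (simp add: T_SEF_def False)
  also have "\<dots> = real (\<Sum>y\<in>state_space V E. card {(i, j) \<in> ?A. SEF i j x = y}) / real (card ?A)"
    by (simp only: sum_divide_distrib[symmetric] of_nat_sum)
  also have "\<dots> = 1" unfolding c using False finite_single[OF x] by simp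
  finally show ?thesis .
qed

lemma T_DEM_row:
  assumes G: "simple_digraph V E" and x: "x \<in> state_space V E"
  shows "(\<Sum>y\<in>state_space V E. T_DEM x y) = 1"
proof (cases "single_edges x = {} \<or> double_edges x = {}")
  case True
  then show ?thesis using x S_finite[OF G] by (simp add: T_DEM_def)
next
  case False
  let ?A = "single_edges x \<times> double_edges x"
  have fA: "finite ?A" using finite_single[OF x] finite_double[OF x] by simp
  have c: "(\<Sum>y\<in>state_space V E. card {((i, j), (k, l)) \<in> ?A. DEM k l i j x = y}) = card ?A"
    by (rule sum_fibers4[OF fA S_finite[OF G]]) (use DEM_in[OF G x] in auto)
  have "(\<Sum>y\<in>state_space V E. T_DEM x y) = (\<Sum>y\<in>state_space V E. real (card {((i, j), (k, l)) \<in> ?A. DEM k l i j x = y}) / real (card ?A))"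
    by (rule sum.cong[OF refl]) (simp add: T_DEM_def False card_cartesian_product)
  also have "\<dots> = real (\<Sum>y\<in>state_space V E. card {((i, j), (k, l)) \<in> ?A. DEM k l i j x = y}) / real (card ?A)"
    by (simp only: sum_divide_distrib[symmetric] of_nat_sum)
  also have "\<dots> = 1" unfolding c using False fA by simp
  finally show ?thesis .
qed

lemma T_SEF_nonneg: "T_SEF x y \<ge> 0" by (simp add: T_SEF_def)
lemma T_DEM_nonneg: "T_DEM x y \<ge> 0" by (simp add: T_DEM_def)

lemma T_SEF_pos:
  assumes x: "x \<in> state_space V E" and e: "(i,j) \<in> single_edges x"
  shows "T_SEF x (SEF i j x) > 0"
proof -
  define y where "y = SEF i j x"
  let ?B = "{(a, b) \<in> single_edges x. SEF a b x = y}"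
  have "(i,j) \<in> ?B" using e by (simp add: y_def)
  moreover have "finite ?B"
    by (rule finite_subset[of _ "single_edges x"]) (auto simp: finite_single[OF x])
  ultimately have "card ?B > 0" by (simp only: card_gt_0_iff) blast
  moreover have "card (single_edges x) > 0" using e finite_single[OF x] by (simp only: card_gt_0_iff) blast
  ultimately have "real (card ?B) / real (card (single_edges x)) > 0"
    by (intro divide_pos_pos) simp_all
  moreover have ne: "\<not> single_edges x = {}" using e by blast
  ultimately have "T_SEF x y > 0" unfolding T_SEF_def by (subst if_not_P[OF ne])
  then show ?thesis by (simp add: y_def)
qed

lemma T_DEM_pos:
  assumes x: "x \<in> state_space V E" and e: "(i,j) \<in> single_edges x" and d: "(k,l) \<in> double_edges x"
  shows "T_DEM x (DEM k l i j x) > 0"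
proof -
  define y where "y = DEM k l i j x"
  let ?B = "{((a, b), (c, d)) \<in> single_edges x \<times> double_edges x. DEM c d a b x = y}"
  have "((i,j),(k,l)) \<in> ?B" using e d by (simp add: y_def)
  moreover have "finite ?B"
    by (rule finite_subset[of _ "single_edges x \<times> double_edges x"]) (auto simp: finite_single[OF x] finite_double[OF x])
  ultimately have "card ?B > 0" by (simp only: card_gt_0_iff) blast
  moreover have "card (single_edges x) > 0" using e finite_single[OF x] by (simp only: card_gt_0_iff) blast
  moreover have "card (double_edges x) > 0" using d finite_double[OF x] by (simp only: card_gt_0_iff) blast
  ultimately have "real (card ?B) / (real (card (single_edges x)) * real (card (double_edges x))) > 0"
    by (intro divide_pos_pos mult_pos_pos) simp_all
  moreover have ne: "\<not> (single_edges x = {} \<or> double_edges x = {})" using e d by auto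
  ultimately have "T_DEM x y > 0" unfolding T_DEM_def by (subst if_not_P[OF ne])
  then show ?thesis by (simp add: y_def)
qed


lemma E_in: "simple_digraph V E \<Longrightarrow> E \<in> state_space V E"
  by (simp add: state_space_def)

lemma T_SM_sym: "x \<in> state_space V E \<Longrightarrow> y \<in> state_space V E \<Longrightarrow> T_SM p q x y = T_SM p q y x"
  by (simp add: T_SM_def T_SEF_sym T_DEM_sym)

lemma T_SM_nonneg: "0 \<le> p \<Longrightarrow> 0 \<le> q \<Longrightarrow> T_SM p q x y \<ge> 0"
  unfolding T_SM_def by (intro add_nonneg_nonneg mult_nonneg_nonneg) (simp_all add: T_SEF_nonneg T_DEM_nonneg)

lemma T_SM_SEF_pos:
  assumes "0 < p" "0 \<le> q" "x \<in> state_space V E" "(i,j) \<in> single_edges x"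
  shows "T_SM p q x (SEF i j x) > 0"
proof -
  have "p * T_SEF x (SEF i j x) > 0" using T_SEF_pos[OF assms(3,4)] assms(1) by simp
  moreover have "q * T_DEM x (SEF i j x) \<ge> 0" by (rule mult_nonneg_nonneg[OF assms(2) T_DEM_nonneg])
  ultimately show ?thesis unfolding T_SM_def by linarith
qed

lemma T_SM_DEM_pos:
  assumes "0 \<le> p" "0 < q" "x \<in> state_space V E" "(i,j) \<in> single_edges x" "(k,l) \<in> double_edges x"
  shows "T_SM p q x (DEM k l i j x) > 0"
proof -
  have "q * T_DEM x (DEM k l i j x) > 0" using T_DEM_pos[OF assms(3,4,5)] assms(2) by simp
  moreover have "p * T_SEF x (DEM k l i j x) \<ge> 0" by (rule mult_nonneg_nonneg[OF assms(1) T_SEF_nonneg])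
  ultimately show ?thesis unfolding T_SM_def by linarith
qed

lemma T_SM_self:
  assumes "0 < p" "0 \<le> q" "single_edges x = {}"
  shows "T_SM p q x x > 0"
proof -
  have "p * T_SEF x x > 0" using assms by (simp add: T_SEF_def)
  moreover have "q * T_DEM x x \<ge> 0" by (rule mult_nonneg_nonneg[OF assms(2) T_DEM_nonneg])
  ultimately show ?thesis unfolding T_SM_def by linarith
qed

lemma mp_nonneg:
  assumes "\<forall>a\<in>S. \<forall>b\<in>S. T a b \<ge> 0" "y \<in> S"
  shows "mat_pow_on S T n x y \<ge> 0"
  using assms(2)
proof (induction n arbitrary: y)
  case 0 then show ?case by simp
next
  case (Suc n) then show ?case using assms(1) by (auto intro!: sum_nonneg mult_nonneg_nonneg)
qed

lemma mp_step:
  assumes fS: "finite S" and nn: "\<forall>a\<in>S. \<forall>b\<in>S. T a b \<ge> 0" and y: "y \<in> S" and z: "z \<in> S"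
    and p1: "mat_pow_on S T n x y > 0" and p2: "T y z > 0"
  shows "mat_pow_on S T (Suc n) x z > 0"
proof -
  have "mat_pow_on S T n x y * T y z > 0" using p1 p2 by simp
  also have "mat_pow_on S T n x y * T y z \<le> (\<Sum>w\<in>S. mat_pow_on S T n x w * T w z)"
    by (rule member_le_sum[OF y _ fS]) (use mp_nonneg[OF nn] nn z in \<open>auto intro!: mult_nonneg_nonneg\<close>)
  finally show ?thesis by simp
qed

lemma mp_reach:
  assumes fS: "finite S" and nn: "\<forall>a\<in>S. \<forall>b\<in>S. T a b \<ge> 0" and x: "x \<in> S"
    and r: "(\<lambda>a b. a \<in> S \<and> b \<in> S \<and> T a b > 0)\<^sup>*\<^sup>* x y"
  shows "\<exists>n. mat_pow_on S T n x y > 0"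
  using r
proof (induction rule: rtranclp_induct)
  case base
  have "mat_pow_on S T 0 x x > 0" by simp
  then show ?case by blast
next
  case (step y z)
  then obtain n where "mat_pow_on S T n x y > 0" by blast
  then have "mat_pow_on S T (Suc n) x z > 0" using mp_step[OF fS nn] step(2) by blast
  then show ?case by blast
qed

lemma sym_rtranclp:
  assumes "\<And>a b. R a b \<Longrightarrow> R b a" "R\<^sup>*\<^sup>* a b"
  shows "R\<^sup>*\<^sup>* b a"
  using assms(2)
proof (induction rule: rtranclp_induct)
  case base then show ?case by simp
next
  case (step y z)
  then show ?case using assms(1) by (meson converse_rtranclp_into_rtranclp)
qed

lemma reach_E:
  assumes G: "simple_digraph V E" and p: "0 < p" and q: "0 < q" and x: "x \<in> state_space V E"
  shows "(\<lambda>a b. a \<in> state_space V E \<and> b \<in> state_space V E \<and> T_SM p q a b > 0)\<^sup>*\<^sup>* x E"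
  using x
proof (induction "card (x - E)" arbitrary: x rule: less_induct)
  case less
  let ?S = "state_space V E"
  let ?R = "\<lambda>a b. a \<in> ?S \<and> b \<in> ?S \<and> T_SM p q a b > 0"
  have xS: "x \<in> ?S" by (rule less.prems)
  have fE: "finite E" using G by (rule S_mem(1)[OF E_in])
  have fx: "finite x" by (rule S_mem(1)[OF xS])
  show ?case
  proof (cases "x = E")
    case True then show ?thesis by simp
  next
    case False
    have "\<not> x \<subseteq> E"
    proof
      assume "x \<subseteq> E"
      then have "x = E" using card_subset_eq[OF fE] S_mem(4)[OF xS] by blast
      then show False using False by simp
    qed
    then obtain u v where uv: "(u,v) \<in> x" "(u,v) \<notin> E" by auto
    have vu: "(v,u) \<in> E" using S_mem(5)[OF xS, of u v] uv by blast
    have fxE: "finite (x - E)" using fx by simp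
    have mem: "(u,v) \<in> x - E" using uv by simp
    show ?thesis
    proof (cases "(v,u) \<in> x")
      case False
      have s: "(u,v) \<in> single_edges x" using uv False by (simp add: single_mem)
      define x' where "x' = SEF u v x"
      have x'S: "x' \<in> ?S" unfolding x'_def by (rule SEF_in[OF G xS s])
      have "x' - E = (x - E) - {(u,v)}" unfolding x'_def SEF_def using vu by auto
      then have "card (x' - E) < card (x - E)" using card_Diff1_less[OF fxE mem] by simp
      then have r2: "?R\<^sup>*\<^sup>* x' E" using less.hyps x'S by blast
      have r1: "?R x x'" using xS x'S T_SM_SEF_pos[OF p less_imp_le[OF q] xS s] unfolding x'_def by simp
      show ?thesis by (rule converse_rtranclp_into_rtranclp[of ?R x x' E, OF r1 r2])
    next
      case True
      have d: "(u,v) \<in> double_edges x" using uv True by (simp add: double_mem)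
      have ES: "E \<in> ?S" by (rule E_in[OF G])
      have "\<exists>a b. (a,b) \<in> double_edges E \<and> (a,b) \<notin> x"
      proof (rule ccontr)
        assume "\<not> (\<exists>a b. (a,b) \<in> double_edges E \<and> (a,b) \<notin> x)"
        then have "\<forall>a b. (a,b) \<in> double_edges E \<longrightarrow> (a,b) \<in> x" by blast
        then have sub: "double_edges E \<subseteq> double_edges x" by (auto simp: double_edges_def)
        have "double_edges E = double_edges x"
          using card_subset_eq[OF finite_double[OF xS] sub] card_double_const[OF ES xS] by simp
        then have "(u,v) \<in> double_edges E" using d by simp
        then show False using uv(2) by (simp add: double_mem)
      qed
      then obtain a b where ab: "(a,b) \<in> double_edges E" "(a,b) \<notin> x" by blast
      have "(b,a) \<in> x" using S_mem(5)[OF xS, of a b] ab by (auto simp: double_mem)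
      then have s: "(b,a) \<in> single_edges x" using ab by (simp add: single_mem)
      define x' where "x' = DEM u v b a x"
      have x'S: "x' \<in> ?S" unfolding x'_def by (rule DEM_in[OF G xS s d])
      have "x' - E = (x - E) - {(u,v)}" unfolding x'_def DEM_def using ab(1) by (auto simp: double_mem)
      then have "card (x' - E) < card (x - E)" using card_Diff1_less[OF fxE mem] by simp
      then have r2: "?R\<^sup>*\<^sup>* x' E" using less.hyps x'S by blast
      have r1: "?R x x'" using xS x'S T_SM_DEM_pos[OF less_imp_le[OF p] q xS s d] unfolding x'_def by simp
      show ?thesis by (rule converse_rtranclp_into_rtranclp[of ?R x x' E, OF r1 r2])
    qed
  qed
qed


lemma T_SM_row:
  assumes G: "simple_digraph V E" and x: "x \<in> state_space V E" and pq: "p + q = 1"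
  shows "(\<Sum>y\<in>state_space V E. T_SM p q x y) = 1"
proof -
  have "(\<Sum>y\<in>state_space V E. T_SM p q x y)
      = p * (\<Sum>y\<in>state_space V E. T_SEF x y) + q * (\<Sum>y\<in>state_space V E. T_DEM x y)"
    unfolding T_SM_def by (simp add: sum.distrib sum_distrib_left)
  then show ?thesis using T_SEF_row[OF G x] T_DEM_row[OF G x] pq by simp
qed

lemma aperiodic_at:
  assumes G: "simple_digraph V E" and p: "0 < p" and q: "0 < q" and x: "x \<in> state_space V E"
    and dE: "double_edges E \<noteq> {}"
  shows "Gcd {n. n > 0 \<and> mat_pow_on (state_space V E) (T_SM p q) n x x > 0} = 1"
proof -
  let ?S = "state_space V E"
  let ?N = "{n. n > 0 \<and> mat_pow_on ?S (T_SM p q) n x x > 0}"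
  have fS: "finite ?S" by (rule S_finite[OF G])
  have nn: "\<forall>a\<in>?S. \<forall>b\<in>?S. T_SM p q a b \<ge> 0" using T_SM_nonneg[OF less_imp_le[OF p] less_imp_le[OF q]] by blast
  have m0: "mat_pow_on ?S (T_SM p q) 0 x x > 0" by simp
  have ES: "E \<in> ?S" by (rule E_in[OF G])
  have "card (double_edges E) > 0" using dE finite_double[OF ES] by (simp only: card_gt_0_iff) blast
  then have "card (double_edges x) > 0" using card_double_const[OF ES x] by simp
  then have dx: "double_edges x \<noteq> {}" by auto
  show ?thesis
  proof (cases "single_edges x = {}")
    case True
    have "mat_pow_on ?S (T_SM p q) (Suc 0) x x > 0"
      by (rule mp_step[OF fS nn x x m0]) (rule T_SM_self[OF p less_imp_le[OF q] True])
    then have "1 \<in> ?N" by simp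
    then have "Gcd ?N dvd 1" by (rule Gcd_dvd)
    then show ?thesis by simp
  next
    case False
    then obtain i j where s: "(i,j) \<in> single_edges x" by auto
    from dx obtain k l where d: "(k,l) \<in> double_edges x" by auto
    have h: "(i,j) \<in> x" "(j,i) \<notin> x" "(k,l) \<in> x" "(l,k) \<in> x" using s d by (auto simp: single_mem double_mem)
    have kl: "k \<noteq> l" using h(3) S_mem(3)[OF x] by auto
    define x1 where "x1 = SEF i j x"
    define x2 where "x2 = DEM k l i j x"
    have x1S: "x1 \<in> ?S" unfolding x1_def by (rule SEF_in[OF G x s])
    have x2S: "x2 \<in> ?S" unfolding x2_def by (rule DEM_in[OF G x s d])
    have t01: "T_SM p q x x1 > 0" unfolding x1_def by (rule T_SM_SEF_pos[OF p less_imp_le[OF q] x s])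
    have sw1: "(j,i) \<in> single_edges x1 \<and> SEF j i x1 = x" using SEF_swap[OF s] x1_def by simp
    have t10: "T_SM p q x1 x > 0"
      using T_SM_SEF_pos[OF p less_imp_le[OF q] x1S, of j i] sw1 by simp
    have d1: "(k,l) \<in> double_edges x1" using h unfolding x1_def SEF_def by (auto simp: double_mem)
    have e12: "DEM k l j i x1 = x2" using h unfolding x1_def x2_def SEF_def DEM_def by auto
    have t12: "T_SM p q x1 x2 > 0"
      using T_SM_DEM_pos[OF less_imp_le[OF p] q x1S _ d1, of j i] sw1 e12 by simp
    have sw2: "(l,k) \<in> single_edges x2 \<and> (j,i) \<in> double_edges x2 \<and> DEM j i l k x2 = x"
      using DEM_swap[OF s d _ kl] x2_def by simp
    have t20: "T_SM p q x2 x > 0"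
      using T_SM_DEM_pos[OF less_imp_le[OF p] q x2S, of l k j i] sw2 by simp
    have a1: "mat_pow_on ?S (T_SM p q) (Suc 0) x x1 > 0" by (rule mp_step[OF fS nn x x1S m0 t01])
    have a2: "mat_pow_on ?S (T_SM p q) (Suc (Suc 0)) x x > 0" by (rule mp_step[OF fS nn x1S x a1 t10])
    have b2: "mat_pow_on ?S (T_SM p q) (Suc (Suc 0)) x x2 > 0" by (rule mp_step[OF fS nn x1S x2S a1 t12])
    have b3: "mat_pow_on ?S (T_SM p q) (Suc (Suc (Suc 0))) x x > 0" by (rule mp_step[OF fS nn x2S x b2 t20])
    have "2 \<in> ?N" using a2 by (simp add: numeral_2_eq_2)
    then have g2: "Gcd ?N dvd 2" by (rule Gcd_dvd)
    have "3 \<in> ?N" using b3 by (simp add: numeral_3_eq_3)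
    then have g3: "Gcd ?N dvd 3" by (rule Gcd_dvd)
    have "Gcd ?N dvd (3 - 2)" using dvd_diff_nat[OF g3 g2] .
    then show ?thesis by simp
  qed
qed

theorem lemma3p5:
  fixes V :: "'v set" and E :: "('v \<times> 'v) set" and p_SEF p_DEM :: real
  assumes "simple_digraph V E"
    and "0 < p_SEF" and "p_SEF < 1" and "0 < p_DEM" and "p_DEM < 1"
    and "p_SEF + p_DEM = 1"
  shows "doubly_stochastic_on (state_space V E) (T_SM p_SEF p_DEM)
       \<and> irreducible_on (state_space V E) (T_SM p_SEF p_DEM)
       \<and> (double_edges E \<noteq> {} \<longrightarrow> aperiodic_on (state_space V E) (T_SM p_SEF p_DEM))"
proof (intro conjI impI)
  note G = assms(1) and p = assms(2) and q = assms(4)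
  let ?S = "state_space V E" and ?T = "T_SM p_SEF p_DEM"
  have fS: "finite ?S" by (rule S_finite[OF G])
  have nn: "\<forall>a\<in>?S. \<forall>b\<in>?S. ?T a b \<ge> 0" using T_SM_nonneg[OF less_imp_le[OF p] less_imp_le[OF q]] by blast
  have row: "\<forall>x\<in>?S. (\<Sum>y\<in>?S. ?T x y) = 1" using T_SM_row[OF G _ assms(6)] by blast
  have col: "\<forall>y\<in>?S. (\<Sum>x\<in>?S. ?T x y) = 1"
  proof
    fix y assume y: "y \<in> ?S"
    have "(\<Sum>x\<in>?S. ?T x y) = (\<Sum>x\<in>?S. ?T y x)"
      by (rule sum.cong[OF refl]) (rule T_SM_sym[OF _ y])
    then show "(\<Sum>x\<in>?S. ?T x y) = 1" using row y by simp
  qed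
  show "doubly_stochastic_on ?S ?T"
    unfolding doubly_stochastic_on_def stochastic_on_def using nn row col by simp
  show "irreducible_on ?S ?T"
    unfolding irreducible_on_def
  proof (intro ballI)
    fix x y assume x: "x \<in> ?S" and y: "y \<in> ?S"
    let ?R = "\<lambda>a b. a \<in> ?S \<and> b \<in> ?S \<and> ?T a b > 0"
    have r1: "?R\<^sup>*\<^sup>* x E" by (rule reach_E[OF G p q x])
    have r2: "?R\<^sup>*\<^sup>* y E" by (rule reach_E[OF G p q y])
    have symR: "\<And>a b. ?R a b \<Longrightarrow> ?R b a" using T_SM_sym by metis
    have r3: "?R\<^sup>*\<^sup>* E y" by (rule sym_rtranclp[of ?R, OF symR r2])
    have "?R\<^sup>*\<^sup>* x y" by (rule rtranclp_trans[OF r1 r3])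
    then show "\<exists>n. mat_pow_on ?S ?T n x y > 0" by (rule mp_reach[OF fS nn x])
  qed
  assume dE: "double_edges E \<noteq> {}"
  show "aperiodic_on ?S ?T"
    unfolding aperiodic_on_def using aperiodic_at[OF G p q _ dE] by blast
qed

end
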